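(* Let $n\ge1$ and $\varepsilon_1,\dots,\varepsilon_n\in\{-1,1\}$ with at least one $\varepsilon_i=-1$. Put $a=n-\max\{i:\varepsilon_i=-1\}$. Then $\mathcal S(\varepsilon_1,\dots,\varepsilon_n,1)=(-1)^a\binom{n-1}{a}\,2^{\otimes n}$ in $V^{\otimes n}$.
   Context: Let $V=\mathbb Q^\times\otimes_{\mathbb Z}\mathbb Q$ (torsion, in particular $-1$, becomes $0$); for $f\in\mathbb Q^\times$ write $f$ for its image in $V$. Tensors in $V^{\otimes n}$ are multilinear in the multiplicative sense, and any formal tensor having the number $0$ as a factor is interpreted as $0$. $2^{\otimes n}=2\otimes\cdots\otimes2$. Define $\mu(x,y)=1-y/x$ if $x\ne0$, $\mu(0,y)=y$. For a tuple $(a_1,\dots,a_m)$, $m\ge2$ (the decorated polygon $P(a_1,\dots,a_m)$ with root decoration $a_m$, attached to $G(a_{m-1},\dots,a_1;a_m)$), define $\mathcal S(a_1,\dots,a_m)\in V^{\otimes(m-1)}$ by $\mathcal S(a_1,a_2)=\mu(a_1,a_2)$ and, for $m\ge3$, $\mathcal S(a_1,\dots,a_m)=\sum_{i=1}^{m-1}\mathcal S(a_1,\dots,\widehat{a_i},\dots,a_m)\otimes\mu(a_i,a_{i+1})-\sum_{i=2}^{m-1}\mathcal S(a_1,\dots,\widehat{a_i},\dots,a_m)\otimes\mu(a_i,a_{i-1})$. *)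

theory Defs
  imports "HOL-Computational_Algebra.Computational_Algebra"
begin

text \<open>Model of V = Q^x (x) Q: since Q^x / torsion is free abelian on the primes,
  V is the Q-vector space with basis the primes; the image of a nonzero rational f
  is its vector of p-adic valuations (p ranging over primes; non-primes give 0).
  V^{(x) k} is modelled as functions on index lists (p_1,...,p_k) of length k
  (coordinates w.r.t. the tensor basis); values on lists of other lengths are 0.\<close>

type_synonym tens = "nat list \<Rightarrow> rat"

definition pval :: "nat \<Rightarrow> rat \<Rightarrow> int" where
  "pval p x = (if prime p \<and> x \<noteq> 0 then
      (let (a, b) = quotient_of x in
        int (multiplicity (int p) a) - int (multiplicity (int p) b)) else 0)"

text \<open>image of f in V; the number 0 is sent to the zero vector (convention of the paper).\<close>
definition vecV :: "rat \<Rightarrow> nat \<Rightarrow> rat" where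
  "vecV f = (\<lambda>p. of_int (pval p f))"

definition tappend :: "tens \<Rightarrow> rat \<Rightarrow> tens" where
  "tappend T x = (\<lambda>ps. if ps = [] then 0 else T (butlast ps) * vecV x (last ps))"

definition ptensor :: "rat list \<Rightarrow> tens" where
  "ptensor fs = (\<lambda>ps. if length ps = length fs
                      then (\<Prod>i<length fs. vecV (fs ! i) (ps ! i)) else 0)"

definition tscale :: "rat \<Rightarrow> tens \<Rightarrow> tens" where
  "tscale c T = (\<lambda>ps. c * T ps)"

definition mu :: "rat \<Rightarrow> rat \<Rightarrow> rat" where
  "mu x y = (if x \<noteq> 0 then 1 - y / x else y)"

definition remove_at :: "nat \<Rightarrow> 'a list \<Rightarrow> 'a list" where
  "remove_at i xs = take i xs @ drop (Suc i) xs"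

lemma length_remove_at[simp]: "i < length xs \<Longrightarrow> length (remove_at i xs) = length xs - 1"
  by (simp add: remove_at_def)

text \<open>S(a_1,...,a_m) with 0-based list indexing; defined as 0 for m < 2 (irrelevant).\<close>
function S :: "rat list \<Rightarrow> tens" where
  "S as = (if length as < 2 then (\<lambda>_. 0)
           else if length as = 2 then ptensor [mu (as ! 0) (as ! 1)]
           else (\<lambda>ps. (\<Sum>i\<in>{0..<length as - 1}.
                        tappend (S (remove_at i as)) (mu (as ! i) (as ! Suc i)) ps)
                   - (\<Sum>i\<in>{1..<length as - 1}.
                        tappend (S (remove_at i as)) (mu (as ! i) (as ! (i - 1))) ps)))"
  by pat_completeness auto
termination
  by (relation "measure length") auto

end

theory Submission imports Defs begin

declare S.simps[simp del]

lemma vecV0: "vecV 0 = (\<lambda>_. 0)"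
  by (rule ext) (simp add: vecV_def pval_def)

lemma tappend_ptensor: "tappend (ptensor fs) x = ptensor (fs @ [x])"
proof (rule ext)
  fix ps :: "nat list"
  show "tappend (ptensor fs) x ps = ptensor (fs @ [x]) ps"
  proof (cases ps rule: rev_exhaust)
    case Nil then show ?thesis by (simp add: tappend_def ptensor_def)
  next
    case (snoc qs p)
    show ?thesis
    proof (cases "length qs = length fs")
      case True
      have "(\<Prod>i<length (fs @ [x]). vecV ((fs @ [x]) ! i) ((qs @ [p]) ! i))
          = (\<Prod>i<length fs. vecV ((fs @ [x]) ! i) ((qs @ [p]) ! i)) * vecV x p"
        using True by (simp add: nth_append)
      also have "(\<Prod>i<length fs. vecV ((fs @ [x]) ! i) ((qs @ [p]) ! i))
          = (\<Prod>i<length fs. vecV (fs ! i) (qs ! i))"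
        using True by (intro prod.cong) (auto simp: nth_append)
      finally show ?thesis using True snoc by (simp add: tappend_def ptensor_def)
    qed (simp_all add: snoc tappend_def ptensor_def)
  qed
qed

lemma mu_pm: "x \<in> {-1,1} \<Longrightarrow> y \<in> {-1,1} \<Longrightarrow> mu x y = (if x = y then 0 else 2)"
  by (auto simp: mu_def)

definition T :: "nat \<Rightarrow> tens" where "T k = ptensor (replicate k 2)"

lemma tappend_scale:
  assumes "x \<in> {-1,1}" "y \<in> {-1,1}"
  shows "tappend (tscale c (T k)) (mu x y) = tscale (c * (if x = y then 0 else 1)) (T (Suc k))"
proof (cases "x = y")
  case True
  then show ?thesis using assms by (auto simp: mu_pm tappend_def tscale_def vecV0 intro!: ext)
next
  case False
  have "tappend (tscale c (T k)) 2 = tscale c (tappend (T k) 2)"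
    by (auto simp: tappend_def tscale_def intro!: ext)
  also have "tappend (T k) 2 = T (Suc k)"
    by (simp add: T_def tappend_ptensor replicate_append_same[symmetric])
  finally show ?thesis using False assms by (simp add: mu_pm)
qed

definition F :: "rat list \<Rightarrow> rat" where
  "F b = (if \<exists>k<length b. b!k \<noteq> last b then
     (let j = GREATEST k. k < length b \<and> b!k \<noteq> last b in
       (-1)^(length b - 2 - j) * of_nat ((length b - 2) choose (length b - 2 - j))) else 0)"

lemma F_eq:
  assumes "j < length b" "b!j \<noteq> last b" "\<And>k. j < k \<Longrightarrow> k < length b \<Longrightarrow> b!k = last b"
  shows "F b = (-1)^(length b - 2 - j) * of_nat ((length b - 2) choose (length b - 2 - j))"
proof -
  have "(GREATEST k. k < length b \<and> b!k \<noteq> last b) = j"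
    by (rule Greatest_equality) (use assms not_le in auto)
  then show ?thesis using assms unfolding F_def by auto
qed

lemma F_const: "(\<And>k. k < length b \<Longrightarrow> b!k = last b) \<Longrightarrow> F b = 0"
  by (auto simp: F_def)

lemma rm_nth: "k < length b - 1 \<Longrightarrow> i < length b \<Longrightarrow> remove_at i b ! k = b ! (if k < i then k else Suc k)"
  by (auto simp: remove_at_def nth_append min_def)

lemma rm_last: "i < length b - 1 \<Longrightarrow> last (remove_at i b) = last b"
  by (simp add: remove_at_def)

lemma rm_set: "set (remove_at i b) \<subseteq> set b"
  unfolding remove_at_def by (auto dest: in_set_takeD in_set_dropD)


lemma telescope:
  "(\<Sum>i<(j::nat). (d i - (if i = 0 then 0 else d (i - 1)))) = (if j = 0 then 0 else (d (j - 1) :: rat))"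
  by (induction j) auto

lemma pascal_sign:
  "(-1)^a * (of_nat (Suc n choose a) :: rat) =
     (-1)^a * of_nat (n choose a) + (if a \<ge> 1 then - ((-1)^(a-1) * of_nat (n choose (a - 1))) else 0)"
  by (cases a) (auto simp: algebra_simps)

lemma core:
  assumes sb: "set b \<subseteq> {-1,1}" and m: "length b = m" "m \<ge> 3"
  defines "d \<equiv> \<lambda>i. (if b!i = b!Suc i then 0 else 1 :: rat)"
  shows "F b = (\<Sum>i<m-1. (d i - (if i = 0 then 0 else d (i-1))) * F (remove_at i b))"
proof (cases "\<forall>k<m. b!k = last b")
  case True
  have "F (remove_at i b) = 0" if "i < m - 1" for i
    by (rule F_const) (use that True m in \<open>auto simp: rm_last rm_nth\<close>)
  then show ?thesis using True m by (simp add: F_const)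
next
  case False
  define x where "x = last b"
  have bne: "b \<noteq> []" using m by auto
  have lastm: "b ! (m-1) = x" using bne m by (simp add: x_def last_conv_nth)
  define j where "j = (GREATEST k. k < m \<and> b!k \<noteq> x)"
  have ex: "\<exists>k. k < m \<and> b!k \<noteq> x" using False x_def by auto
  have jb: "\<forall>y. y < m \<and> b!y \<noteq> x \<longrightarrow> y < m" by auto
  have jP: "j < m \<and> b!j \<noteq> x" unfolding j_def
    by (rule GreatestI_ex_nat[OF ex, of m]) auto
  have jmax: "\<And>k. j < k \<Longrightarrow> k < m \<Longrightarrow> b!k = x"
  proof (rule ccontr)
    fix k assume "j < k" "k < m" "b!k \<noteq> x"
    then have "k \<le> j" unfolding j_def by (intro Greatest_le_nat[of _ _ m]) auto
    with \<open>j < k\<close> show False by simp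
  qed
  have jm: "j < m - 1" using jP lastm by (cases "j = m - 1") auto
  define a where "a = m - 2 - j"
  have Fb: "F b = (-1)^a * of_nat ((m - 2) choose a)"
    using F_eq[of j b] jP jmax m unfolding a_def x_def by auto
  define K :: rat where "K = (-1)^a * of_nat ((m - 3) choose a)"
  define c where "c = (\<lambda>i. (d i - (if i = 0 then 0 else d (i-1))) * F (remove_at i b))"
  have lenrm: "\<And>i. i < m \<Longrightarrow> length (remove_at i b) = m - 1" using m by simp
  have Flow: "F (remove_at i b) = K" if "i < j" for i
  proof -
    have "F (remove_at i b) = (-1)^((m-1) - 2 - (j-1)) * of_nat (((m-1) - 2) choose ((m-1) - 2 - (j-1)))"
      apply (rule trans[OF F_eq[of "j-1"]])
      using that jP jmax jm m lenrm[of i] rm_last[of i b]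
      by (auto simp: rm_nth x_def)
    moreover have "(m-1) - 2 - (j-1) = a" "(m-1) - 2 = m - 3" using that jm m by (auto simp: a_def)
    ultimately show ?thesis by (simp add: K_def)
  qed
  have sum_low: "(\<Sum>i<j. c i) = K * (if j = 0 then 0 else d (j - 1))"
    using telescope[of d j] Flow by (simp add: c_def sum_distrib_right[symmetric])
  have dj: "d j = 1" using jP jmax[of "Suc j"] jm m by (auto simp: d_def x_def)
  have cj: "c j = (if j = 0 then 0 else K * (1 - d (j - 1)))"
  proof (cases "j = 0")
    case True
    have "F (remove_at 0 b) = 0"
      by (rule F_const) (use jmax True m lenrm[of 0] rm_last[of 0 b] in \<open>auto simp: rm_nth x_def\<close>)
    then show ?thesis using True by (simp add: c_def)
  next
    case jn: False
    show ?thesis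
    proof (cases "b!(j-1) = b!j")
      case False
      then have "d (j-1) = 1" using jn by (simp add: d_def)
      then show ?thesis using jn dj by (simp add: c_def)
    next
      case True
      have "F (remove_at j b) = (-1)^((m-1) - 2 - (j-1)) * of_nat (((m-1) - 2) choose ((m-1) - 2 - (j-1)))"
        apply (rule trans[OF F_eq[of "j-1"]])
        using True jn jP jmax jm m lenrm[of j] rm_last[of j b]
        by (auto simp: rm_nth x_def)
      moreover have "(m-1) - 2 - (j-1) = a" "(m-1) - 2 = m - 3" using jn jm m by (auto simp: a_def)
      moreover have "d (j-1) = 0" using True jn by (simp add: d_def)
      ultimately show ?thesis using jn dj by (simp add: c_def K_def)
    qed
  qed
  define V :: rat where "V = (if a \<ge> 1 then - ((-1)^(a-1) * of_nat ((m-3) choose (a - 1))) else 0)"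
  have chigh: "c i = (if i = Suc j then V else 0)" if "i \<in> {Suc j..<m-1}" for i
  proof -
    have di: "d i = 0" using that jmax[of i] jmax[of "Suc i"] m by (auto simp: d_def)
    show ?thesis
    proof (cases "i = Suc j")
      case True
      have "F (remove_at (Suc j) b) = (-1)^((m-1) - 2 - j) * of_nat (((m-1) - 2) choose ((m-1) - 2 - j))"
        apply (rule trans[OF F_eq[of "j"]])
        using True that jP jmax jm m lenrm[of "Suc j"] rm_last[of "Suc j" b]
        by (auto simp: rm_nth x_def)
      moreover have "(m-1) - 2 - j = a - 1" "(m-1) - 2 = m - 3" "a \<ge> 1" using that True m by (auto simp: a_def)
      ultimately show ?thesis using True di dj by (simp add: c_def V_def)
    next
      case False
      then have "d (i - 1) = 0" using that jmax[of "i-1"] jmax[of i] m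
        by (auto simp: d_def)
      then show ?thesis using False di by (simp add: c_def)
    qed
  qed
  have sum_high: "(\<Sum>i\<in>{Suc j..<m-1}. c i) = V"
  proof -
    have "(\<Sum>i\<in>{Suc j..<m-1}. c i) = (\<Sum>i\<in>{Suc j..<m-1}. if i = Suc j then V else 0)"
      by (rule sum.cong) (use chigh in auto)
    also have "\<dots> = V" using jm by (auto simp: V_def a_def)
    finally show ?thesis .
  qed
  have split: "{..<m-1} = {..<j} \<union> {j} \<union> {Suc j..<m-1}" using jm by auto
  have "(\<Sum>i<m-1. c i) = (\<Sum>i<j. c i) + c j + (\<Sum>i\<in>{Suc j..<m-1}. c i)"
    unfolding split by (subst sum.union_disjoint, auto)+
  also have "\<dots> = F b"
  proof (cases "j = 0")
    case True
    then have "a = m - 2" "a \<ge> 1" using m by (auto simp: a_def)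
    moreover have "(-1::rat)^(m-2) = - ((-1)^(m-3))"
    proof -
      obtain k where "m = k + 3" using m by (metis add.commute le_Suc_ex)
      then show ?thesis by simp
    qed
    ultimately show ?thesis using True sum_low cj sum_high Fb m
      by (simp add: V_def)
  next
    case False
    have "m - 2 = Suc (m - 3)" using m by simp
    then show ?thesis using False sum_low cj sum_high Fb pascal_sign[of a "m-3"]
      by (simp add: V_def K_def algebra_simps)
  qed
  finally show ?thesis by (simp add: c_def)
qed


lemma sum_shift0: "(\<Sum>i<(n::nat). if i = 0 then 0 else g i) = (\<Sum>i\<in>{1..<n}. (g i :: rat))"
  by (induction n) (auto simp: atLeastLessThanSuc)

lemma S_eq: "set b \<subseteq> {-1,1} \<Longrightarrow> length b \<ge> 2 \<Longrightarrow> S b = tscale (F b) (T (length b - 1))"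
proof (induction "length b" arbitrary: b rule: less_induct)
  case less
  show ?case
  proof (cases "length b = 2")
    case True
    then obtain x y where b: "b = [x,y]"
      by (auto simp: length_Suc_conv numeral_2_eq_2)
    have xy: "x \<in> {-1,1}" "y \<in> {-1,1}" using less.prems b by auto
    have Sb2: "S b = ptensor [mu x y]" by (subst S.simps) (simp add: b)
    show ?thesis
    proof (cases "x = y")
      case True
      have "F b = 0" by (rule F_const) (use b True in \<open>auto simp: less_Suc_eq\<close>)
      then show ?thesis using b True xy Sb2
        by (auto simp: mu_pm ptensor_def vecV0 tscale_def intro!: ext)
    next
      case False
      have "F b = (-1)^(length b - 2 - 0) * of_nat ((length b - 2) choose (length b - 2 - 0))"
        by (rule F_eq) (use b False in \<open>auto simp: less_Suc_eq\<close>)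
      then have "F b = 1" using b by simp
      then show ?thesis using b False xy Sb2
        by (auto simp: mu_pm T_def tscale_def intro!: ext)
    qed
  next
    case False
    define m where "m = length b"
    have m3: "m \<ge> 3" using False less.prems m_def by auto
    define d where "d \<equiv> \<lambda>i. (if b!i = b!Suc i then 0 else 1 :: rat)"
    have bin: "\<And>i. i < m \<Longrightarrow> b!i \<in> {-1,1}" using less.prems m_def nth_mem by blast
    have IH: "S (remove_at i b) = tscale (F (remove_at i b)) (T (m - 2))" if "i < m - 1" for i
    proof -
      have "S (remove_at i b) = tscale (F (remove_at i b)) (T (length (remove_at i b) - 1))"
        by (rule less.hyps) (use that m3 m_def less.prems rm_set[of i b] in auto)
      then show ?thesis using that m_def by (simp add: numeral_2_eq_2)
    qed
    have t1: "tappend (S (remove_at i b)) (mu (b ! i) (b ! Suc i)) = tscale (F (remove_at i b) * d i) (T (m - 1))"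
      if "i < m - 1" for i
      using that IH[OF that] tappend_scale[OF bin bin, of i "Suc i" "F (remove_at i b)" "m-2"] m3
      by (simp add: d_def Suc_diff_Suc numeral_2_eq_2)
    have t2: "tappend (S (remove_at i b)) (mu (b ! i) (b ! (i - 1))) = tscale (F (remove_at i b) * d (i - 1)) (T (m - 1))"
      if "i < m - 1" "i \<ge> 1" for i
      using that IH[OF that(1)] tappend_scale[OF bin bin, of i "i - 1" "F (remove_at i b)" "m-2"] m3
      by (auto simp: d_def Suc_diff_Suc numeral_2_eq_2)
    have C: "F b = (\<Sum>i<m-1. (d i - (if i = 0 then 0 else d (i-1))) * F (remove_at i b))"
      using core[OF less.prems(1) m_def[symmetric] m3] by (simp only: d_def)
    show ?thesis
    proof (rule ext)
      fix ps
      have "S b ps = (\<Sum>i\<in>{0..<m - 1}. tappend (S (remove_at i b)) (mu (b ! i) (b ! Suc i)) ps)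
                   - (\<Sum>i\<in>{1..<m - 1}. tappend (S (remove_at i b)) (mu (b ! i) (b ! (i - 1))) ps)"
        using m3 m_def by (subst S.simps) simp
      also have "\<dots> = (\<Sum>i<m - 1. F (remove_at i b) * d i * T (m-1) ps)
                   - (\<Sum>i\<in>{1..<m - 1}. F (remove_at i b) * d (i - 1) * T (m-1) ps)"
        using t1 t2 by (simp add: tscale_def atLeast0LessThan)
      also have "(\<Sum>i\<in>{1..<m - 1}. F (remove_at i b) * d (i - 1) * T (m-1) ps)
          = (\<Sum>i<m - 1. if i = 0 then 0 else F (remove_at i b) * d (i - 1) * T (m-1) ps)"
        by (rule sum_shift0[symmetric])
      also have "(\<Sum>i<m - 1. F (remove_at i b) * d i * T (m-1) ps)
           - (\<Sum>i<m - 1. if i = 0 then 0 else F (remove_at i b) * d (i - 1) * T (m-1) ps)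
         = (\<Sum>i<m-1. (d i - (if i = 0 then 0 else d (i-1))) * F (remove_at i b)) * T (m-1) ps"
        by (simp only: sum_subtractf[symmetric] sum_distrib_right) (rule sum.cong, auto simp: algebra_simps)
      also have "\<dots> = F b * T (m-1) ps"
        by (simp only: C)
      finally show "S b ps = tscale (F b) (T (length b - 1)) ps" by (simp add: tscale_def m_def)
    qed
  qed
qed

theorem mainTheorem5:
  fixes eps :: "rat list" and n :: nat
  assumes "n \<ge> 1" and "length eps = n"
    and "set eps \<subseteq> {-1, 1}" and "-1 \<in> set eps"
  defines "a \<equiv> n - Max {i \<in> {1..n}. eps ! (i - 1) = -1}"
  shows "S (eps @ [1]) = tscale ((-1) ^ a * of_nat ((n - 1) choose a)) (ptensor (replicate n 2))"
proof -
  define A where "A = {i \<in> {1..n}. eps ! (i - 1) = -1}"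
  define M where "M = Max A"
  obtain k where k: "k < n" "eps ! k = -1" using assms(2,4) by (metis in_set_conv_nth)
  have "Suc k \<in> A" using k by (auto simp: A_def)
  then have fA: "finite A" "A \<noteq> {}" by (auto simp: A_def)
  have MA: "M \<in> A" unfolding M_def using fA by (rule Max_in)
  have Mmax: "\<And>i. i \<in> A \<Longrightarrow> i \<le> M" unfolding M_def using fA by auto
  have M1: "M \<ge> 1" "M \<le> n" "eps ! (M - 1) = -1" using MA by (auto simp: A_def)
  define b where "b = eps @ [1 :: rat]"
  have lb: "length b = Suc n" using assms(2) by (simp add: b_def)
  have sb: "set b \<subseteq> {-1,1}" using assms(3) by (auto simp: b_def)
  have Sb: "S b = tscale (F b) (T n)" using S_eq[OF sb] lb assms(1) by simp
  have "F b = (-1)^(length b - 2 - (M-1)) * of_nat ((length b - 2) choose (length b - 2 - (M-1)))"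
  proof (rule F_eq)
    show "M - 1 < length b" using M1 lb by simp
    show "b ! (M-1) \<noteq> last b" using M1 assms(2) by (simp add: b_def nth_append)
    fix i assume i: "M - 1 < i" "i < length b"
    show "b ! i = last b"
    proof (cases "i < n")
      case True
      have "eps ! i \<in> {-1,1}" using assms(2,3) True nth_mem by blast
      moreover have "eps ! i \<noteq> -1"
      proof
        assume "eps ! i = -1"
        then have "Suc i \<in> A" using True by (auto simp: A_def)
        then have "Suc i \<le> M" by (rule Mmax)
        with i M1 show False by simp
      qed
      ultimately show ?thesis using True assms(2) by (auto simp: b_def nth_append)
    next
      case False
      then have "i = n" using i lb by simp
      then show ?thesis using assms(2) by (simp add: b_def nth_append)
    qed
  qed
  moreover have aM: "a = n - M" by (simp only: a_def M_def A_def)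
  moreover have "length b - 2 - (M - 1) = a" "length b - 2 = n - 1"
    using lb M1 aM by auto
  ultimately have "F b = (-1)^a * of_nat ((n - 1) choose a)" by simp
  then show ?thesis using Sb by (simp add: b_def T_def)
qed

end
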